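(* Let $n\ge3$, let $0<r<r_n$, let $v$ be a vertex of $P_n$ and let $p\in P_n$ be arbitrary. Then $d_{P_n}(v,g_r(v))\le d_{P_n}(p,g_r(p))$.
   Context: $P_n$ is the boundary of the regular polygon in $\mathbb{R}^2$ whose vertices are the $n$-th roots of unity (its vertices), with the Euclidean metric $\|x-y\|$. $d_{P_n}(x,y)\in[0,1)$ is the counterclockwise arc length of $P_n$ from $x$ to $y$ divided by the perimeter. The directed Vietoris–Rips graph $\mathrm{VR}_<(P_n;r)$ has vertex set $P_n$ and, for distinct $u,w$ with $\|u-w\|<r$, the edge $u\to w$ if $d_{P_n}(u,w)<d_{P_n}(w,u)$, else $w\to u$; it is cyclic if whenever $u_0\to u_1$, every $w$ strictly counterclockwise-between $u_0,u_1$ has $u_0\to w$ and $w\to u_1$. $r_n=\sup\{r\ge0:\mathrm{VR}_<(P_n;r')\text{ is cyclic for all }0<r'<r\}$. For $0<r<r_n$ and $p\in P_n$, $g_r(p)$ is the first point $w$ met when moving counterclockwise from $p$ along $P_n$ with $\|p-w\|=r$. *)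

theory Defs
  imports "HOL-Analysis.Analysis"
begin

text \<open>The plane is modelled as the complex numbers, with the Euclidean metric
  norm (x - y).  The vertices of P_n are the n-th roots of unity.\<close>

definition poly_vert :: "nat \<Rightarrow> nat \<Rightarrow> complex" where
  "poly_vert n k = cis (2 * pi * real k / real n)"

definition Pn :: "nat \<Rightarrow> complex set" where
  "Pn n = (\<Union>k<n. closed_segment (poly_vert n k) (poly_vert n (Suc k)))"

text \<open>Constant-speed (arc-length proportional) counterclockwise parametrisation of
  P_n by t in [0,1), starting at the vertex 1.  Since all sides have equal length,
  t is the counterclockwise arc length from 1 to poly_pt n t divided by the perimeter.\<close>
definition poly_pt :: "nat \<Rightarrow> real \<Rightarrow> complex" where
  "poly_pt n t = (let k = nat \<lfloor>real n * t\<rfloor>; s = real n * t - of_int \<lfloor>real n * t\<rfloor>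
                  in of_real (1 - s) * poly_vert n k + of_real s * poly_vert n (Suc k))"

definition poly_pos :: "nat \<Rightarrow> complex \<Rightarrow> real" where
  "poly_pos n x = (THE t. t \<in> {0..<1} \<and> poly_pt n t = x)"

text \<open>d_{P_n}(x,y): counterclockwise arc length from x to y divided by the perimeter.\<close>
definition dP :: "nat \<Rightarrow> complex \<Rightarrow> complex \<Rightarrow> real" where
  "dP n x y = frac (poly_pos n y - poly_pos n x)"

text \<open>Edge u \<rightarrow> w of the directed Vietoris--Rips graph VR_<(P_n; r).\<close>
definition vr_edge :: "nat \<Rightarrow> real \<Rightarrow> complex \<Rightarrow> complex \<Rightarrow> bool" where
  "vr_edge n r u w \<longleftrightarrow> u \<in> Pn n \<and> w \<in> Pn n \<and> u \<noteq> w \<and> norm (u - w) < r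
      \<and> dP n u w < dP n w u"

definition ccw_between :: "nat \<Rightarrow> complex \<Rightarrow> complex \<Rightarrow> complex \<Rightarrow> bool" where
  "ccw_between n u0 w u1 \<longleftrightarrow> 0 < dP n u0 w \<and> dP n u0 w < dP n u0 u1"

definition vr_cyclic :: "nat \<Rightarrow> real \<Rightarrow> bool" where
  "vr_cyclic n r \<longleftrightarrow> (\<forall>u0 u1. vr_edge n r u0 u1 \<longrightarrow>
      (\<forall>w\<in>Pn n. ccw_between n u0 w u1 \<longrightarrow> vr_edge n r u0 w \<and> vr_edge n r w u1))"

definition r_crit :: "nat \<Rightarrow> real" where
  "r_crit n = Sup {r. r \<ge> 0 \<and> (\<forall>r'. 0 < r' \<and> r' < r \<longrightarrow> vr_cyclic n r')}"

definition g_map :: "nat \<Rightarrow> real \<Rightarrow> complex \<Rightarrow> complex" where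
  "g_map n r p = (THE w. w \<in> Pn n \<and> norm (p - w) = r \<and>
      (\<forall>w'\<in>Pn n. norm (p - w') = r \<longrightarrow> dP n p w \<le> dP n p w'))"

end

theory Submission
  imports Defs
begin


lemma pv_add: "poly_vert n (j + k) = poly_vert n j * poly_vert n k"
  by (simp add: poly_vert_def cis_mult add_divide_distrib distrib_left)

lemma pv_norm[simp]: "norm (poly_vert n k) = 1"
  by (simp add: poly_vert_def)

lemma pv_0[simp]: "poly_vert n 0 = 1"
  by (simp add: poly_vert_def)

lemma pv_n: "n > 0 \<Longrightarrow> poly_vert n n = 1"
  by (simp add: poly_vert_def)

lemma pv_mult_n: "n > 0 \<Longrightarrow> poly_vert n (n * m) = 1"
proof -
  assume n: "n > 0"
  have e: "2 * pi * real (n * m) / real n = 2 * pi * real m"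
    using n by simp
  have "real m \<in> \<int>" by simp
  from cis_multiple_2pi[OF this] show ?thesis unfolding poly_vert_def e .
qed

lemma pv_mod: "n > 0 \<Longrightarrow> poly_vert n (k mod n) = poly_vert n k"
proof -
  assume n: "n > 0"
  have "poly_vert n k = poly_vert n (k mod n + n * (k div n))" by simp
  also have "\<dots> = poly_vert n (k mod n)" using pv_mult_n[OF n] by (simp only: pv_add) simp
  finally show ?thesis by simp
qed

lemma pv_cnj: "cnj (poly_vert n j) * poly_vert n (i + j) = poly_vert n i"
proof -
  have "cnj (poly_vert n j) * poly_vert n j = 1"
    by (metis complex_norm_square mult.commute of_real_1 power_one pv_norm)
  then show ?thesis by (simp add: pv_add mult.commute mult.left_commute)
qed

lemma piece:
  assumes n: "n > 0" and f: "0 \<le> f" "f \<le> 1"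
  shows "poly_pt n ((real K + f) / real n) = of_real (1 - f) * poly_vert n K + of_real f * poly_vert n (Suc K)"
proof (cases "f < 1")
  case True
  have e: "real n * ((real K + f) / real n) = real K + f" using n by simp
  have fl: "\<lfloor>real K + f\<rfloor> = int K" using f True by (simp add: floor_eq_iff)
  show ?thesis unfolding poly_pt_def e Let_def fl by simp
next
  case False
  hence f1: "f = 1" using f by simp
  have e: "real n * ((real K + f) / real n) = real (Suc K)" using n f1 by simp
  have fl: "\<lfloor>real (Suc K)\<rfloor> = int (Suc K)" by (simp only: floor_of_nat)
  have nn: "nat (int (Suc K)) = Suc K" by (simp only: nat_int)
  have nn': "nat (int K + 1) = Suc K" by (metis Suc_as_int nat_int)
  show ?thesis unfolding poly_pt_def e Let_def fl f1 nn using n nn' by simp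
qed

lemma decomp:
  assumes n: "n > 0" and t: "t \<ge> 0"
  obtains K f where "t = (real K + f) / real n" "0 \<le> f" "f < 1"
proof -
  let ?K = "nat \<lfloor>real n * t\<rfloor>" and ?f = "real n * t - of_int \<lfloor>real n * t\<rfloor>"
  have "real ?K = of_int \<lfloor>real n * t\<rfloor>" using t n by simp
  hence "t = (real ?K + ?f) / real n" using n by simp
  moreover have "0 \<le> ?f" "?f < 1" by linarith+
  ultimately show ?thesis using that by blast
qed

lemma gam_rot:
  assumes n: "n > 0" and t: "t \<ge> 0"
  shows "poly_pt n (t + real j / real n) = poly_vert n j * poly_pt n t"
proof -
  obtain K f where tf: "t = (real K + f) / real n" "0 \<le> f" "f < 1" using decomp[OF n t] .
  have "t + real j / real n = (real (j + K) + f) / real n" using tf(1) n by (simp add: field_simps)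
  have f1: "f \<le> 1" using tf(3) by simp
  have "poly_pt n (t + real j / real n) = of_real (1 - f) * poly_vert n (j+K) + of_real f * poly_vert n (Suc (j+K))"
    unfolding \<open>t + real j / real n = (real (j + K) + f) / real n\<close> by (rule piece[OF n tf(2) f1])
  also have "\<dots> = poly_vert n j * (of_real (1 - f) * poly_vert n K + of_real f * poly_vert n (Suc K))"
    using pv_add[of n j K] pv_add[of n j "Suc K"] by (simp add: algebra_simps)
  also have "\<dots> = poly_vert n j * poly_pt n t" using piece[OF n tf(2)] tf by simp
  finally show ?thesis .
qed

lemma gam_per:
  assumes n: "n > 0" and t: "t \<ge> 0"
  shows "poly_pt n (t + real m) = poly_pt n t"
proof -
  have "t + real m = t + real (n * m) / real n" using n by simp
  thus ?thesis using gam_rot[OF n t, of "n*m"] pv_mult_n[OF n] by simp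
qed

lemma gam_0[simp]: "n > 0 \<Longrightarrow> poly_pt n 0 = 1"
  using piece[of n 0 0] by simp

lemma gam_vert: "n > 0 \<Longrightarrow> poly_pt n (real k / real n) = poly_vert n k"
  using piece[of n 0 k] by simp


lemma gam_frac:
  assumes n: "n > 0" and t: "t \<ge> 0"
  shows "poly_pt n t = poly_pt n (frac t)"
proof -
  have "t = frac t + real (nat \<lfloor>t\<rfloor>)" using t by (simp add: frac_def)
  hence "poly_pt n t = poly_pt n (frac t + real (nat \<lfloor>t\<rfloor>))" by simp
  also have "\<dots> = poly_pt n (frac t)" by (rule gam_per[OF n frac_ge_0])
  finally show ?thesis .
qed

lemma gam_img: "n > 0 \<Longrightarrow> t \<ge> 0 \<Longrightarrow> poly_pt n t \<in> poly_pt n ` {0..<1}"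
proof -
  assume n: "n > 0" and t: "t \<ge> 0"
  have "frac t \<in> {0..<1}" using frac_lt_1[of t] frac_ge_0[of t] by simp
  from rev_image_eqI[of "frac t" _ "poly_pt n t" "poly_pt n", OF this gam_frac[OF n t]] show ?thesis .
qed

lemma Pn_gam:
  assumes n: "n > 0"
  shows "Pn n = poly_pt n ` {0..<1}"
proof
  show "Pn n \<subseteq> poly_pt n ` {0..<1}"
  proof
    fix x assume "x \<in> Pn n"
    then obtain K where K: "K < n" "x \<in> closed_segment (poly_vert n K) (poly_vert n (Suc K))"
      unfolding Pn_def by auto
    then obtain u where u: "0 \<le> u" "u \<le> 1" "x = (1 - u) *\<^sub>R poly_vert n K + u *\<^sub>R poly_vert n (Suc K)"
      unfolding closed_segment_def by auto
    have "x = poly_pt n ((real K + u) / real n)"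
      using piece[OF n u(1,2), of K] u(3) by (simp add: scaleR_conv_of_real)
    moreover have "(real K + u) / real n \<ge> 0" using u by simp
    ultimately show "x \<in> poly_pt n ` {0..<1}" using gam_img[OF n] by simp
  qed
next
  show "poly_pt n ` {0..<1} \<subseteq> Pn n"
  proof
    fix x assume "x \<in> poly_pt n ` {0..<1}"
    then obtain t where t: "0 \<le> t" "t < 1" "x = poly_pt n t" by auto
    obtain K f where tf: "t = (real K + f) / real n" "0 \<le> f" "f < 1" using decomp[OF n t(1)] .
    have "t * real n < real n" using t(2) n by simp
    moreover have "t * real n = real K + f" using tf(1) n by simp
    ultimately have "real K < real n" using tf(2) by linarith
    hence Kn: "K < n" by simp
    have "x = (1 - f) *\<^sub>R poly_vert n K + f *\<^sub>R poly_vert n (Suc K)"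
      using piece[OF n tf(2), of K] tf t(3) by (simp add: scaleR_conv_of_real)
    hence "x \<in> closed_segment (poly_vert n K) (poly_vert n (Suc K))"
      unfolding closed_segment_def using tf(2,3) by (intro CollectI exI[of _ f]) simp
    thus "x \<in> Pn n" unfolding Pn_def using Kn by (intro UN_I[of K]) simp_all
  qed
qed

lemma gam_in_Pn: "n > 0 \<Longrightarrow> t \<ge> 0 \<Longrightarrow> poly_pt n t \<in> Pn n"
  using gam_img Pn_gam by auto

lemma pv_in_Pn: "n > 0 \<Longrightarrow> poly_vert n k \<in> Pn n"
  using gam_in_Pn[of n "real k / real n"] gam_vert[of n k] by simp

lemma gam_cont_K:
  assumes n: "n > 0"
  shows "continuous_on {0..real K / real n} (poly_pt n)"
proof (induction K)
  case 0
  then show ?case by simp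
next
  case (Suc K)
  let ?g = "\<lambda>t. of_real (1 - (real n * t - real K)) * poly_vert n K + of_real (real n * t - real K) * poly_vert n (Suc K)"
  have c1: "continuous_on {real K / real n..real (Suc K) / real n} ?g"
    by (intro continuous_intros)
  have e: "\<And>t. t \<in> {real K / real n..real (Suc K) / real n} \<Longrightarrow> poly_pt n t = ?g t"
  proof -
    fix t assume t: "t \<in> {real K / real n..real (Suc K) / real n}"
    have f: "0 \<le> real n * t - real K" "real n * t - real K \<le> 1"
      using t n by (auto simp: field_simps)
    have "t = (real K + (real n * t - real K)) / real n" using n by simp
    hence "poly_pt n t = poly_pt n ((real K + (real n * t - real K)) / real n)" by simp
    also have "\<dots> = ?g t" by (rule piece[OF n f])
    finally show "poly_pt n t = ?g t" .
  qed
  have "continuous_on {real K / real n..real (Suc K) / real n} (poly_pt n)"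
    by (rule continuous_on_eq[OF c1]) (simp add: e)
  moreover have "real K / real n \<le> real (Suc K) / real n" "0 \<le> real K / real n"
    using n by (simp_all add: divide_right_mono)
  hence "{0..real (Suc K) / real n} = {0..real K / real n} \<union> {real K / real n..real (Suc K) / real n}"
    by (simp add: ivl_disj_un_two_touch(4))
  ultimately show ?case using Suc continuous_on_closed_Un[of "{0..real K / real n}" "{real K / real n..real (Suc K) / real n}" "poly_pt n"]
    by (metis closed_real_atLeastAtMost)
qed

lemma gam_cont:
  assumes n: "n > 0" and b: "b \<le> real m"
  shows "continuous_on {0..b} (poly_pt n)"
proof -
  have "real m = real (n * m) / real n" using n by simp
  hence "{0..b} \<subseteq> {0..real (n*m) / real n}" using b by auto
  thus ?thesis using gam_cont_K[OF n, of "n*m"] continuous_on_subset by blast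
qed


lemma cos_lt_c:
  assumes "0 < e" "e < a" "a < 2*pi - e" "e \<le> pi"
  shows "cos a < cos e"
proof (cases "a \<le> pi")
  case True thus ?thesis using assms by (subst cos_mono_less_eq) auto
next
  case False
  have "cos a = cos (2*pi - a)" by simp
  also have "\<dots> < cos e" using assms False by (subst cos_mono_less_eq) auto
  finally show ?thesis .
qed

lemma cos_le_c:
  assumes "0 \<le> e" "e \<le> a" "a \<le> 2*pi - e" "e \<le> pi"
  shows "cos a \<le> cos e"
proof (cases "a \<le> pi")
  case True thus ?thesis using assms by (subst cos_mono_le_eq) auto
next
  case False
  have "cos a = cos (2*pi - a)" by simp
  also have "\<dots> \<le> cos e" using assms False by (subst cos_mono_le_eq) auto
  finally show ?thesis .
qed

lemma re_cnj_cis: "Re (cnj (cis u) * cis v) = cos (v - u)"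
proof -
  have "cnj (cis u) * cis v = cis (v - u)" by (simp add: cis_cnj cis_mult)
  thus ?thesis by simp
qed

lemma pv1_ne1: "n \<ge> 2 \<Longrightarrow> poly_vert n 1 \<noteq> 1"
proof
  assume n: "n \<ge> 2" and e: "poly_vert n 1 = 1"
  have "Re (poly_vert n 1) = cos (2*pi/n)" by (simp add: poly_vert_def)
  moreover have "2*pi/n \<le> pi" using n by (simp add: field_simps)
  hence "cos (2*pi/n) < cos 0" using n by (subst cos_mono_less_eq) auto
  ultimately show False using e by simp
qed

definition Rv :: "nat \<Rightarrow> nat \<Rightarrow> real" where
  "Rv n j = Re (cnj (cis (pi / n)) * poly_vert n j)"

lemma Rv_eq: "Rv n j = cos ((2 * real j - 1) * pi / n)"
proof -
  have "2 * pi * real j / real n - pi / real n = (2 * real j - 1) * pi / real n"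
    by (simp add: diff_divide_distrib left_diff_distrib)
  thus ?thesis unfolding Rv_def poly_vert_def re_cnj_cis by simp
qed

lemma Rv_lin: "Re (cnj (cis (pi / n)) * (of_real a * poly_vert n j + of_real b * poly_vert n k)) = a * Rv n j + b * Rv n k"
  unfolding Rv_def by (simp add: algebra_simps)

lemma inj0:
  assumes n: "n \<ge> 3" and x: "0 \<le> x" "x < 1" and y: "0 \<le> y" "y < 1" and d: "d < n"
    and e: "of_real (1-x) * poly_vert n 0 + of_real x * poly_vert n 1 = of_real (1-y) * poly_vert n d + of_real y * poly_vert n (Suc d)"
  shows "d = 0 \<and> x = y"
proof -
  let ?c = "cos (pi / n)"
  have R0: "Rv n 0 = ?c" "Rv n 1 = ?c" unfolding Rv_eq by simp_all
  have L: "(1-x) * Rv n 0 + x * Rv n 1 = (1-y) * Rv n d + y * Rv n (Suc d)"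
    using arg_cong[OF e, of "\<lambda>z. Re (cnj (cis (pi / n)) * z)"] unfolding Rv_lin .
  hence L': "?c = (1-y) * Rv n d + y * Rv n (Suc d)" unfolding R0 by (simp add: algebra_simps)
  have npos: "real n > 0" using n by simp
  have pin: "pi / n \<le> pi" "0 < pi / n" using n by (simp_all add: field_simps)
  consider "d = 0" | "d = 1" | "d \<ge> 2" by linarith
  then show ?thesis
  proof cases
    case 1
    then have "(of_real (x - y)) * (poly_vert n 1 - 1) = 0" using e by (simp add: algebra_simps)
    thus ?thesis using pv1_ne1[of n] n 1 by simp
  next
    case 2
    have "Rv n 2 < ?c" unfolding Rv_eq
      using n pin by (intro cos_lt_c) (simp_all add: field_simps)
    moreover have "y * (?c - Rv n 2) = 0" using L' 2 R0 by (simp add: algebra_simps numeral_2_eq_2)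
    ultimately have "y = 0" by simp
    hence "(of_real (1 - x)) * (1 - poly_vert n 1) = 0" using e 2 by (simp add: algebra_simps)
    thus ?thesis using pv1_ne1[of n] n x by simp
  next
    case 3
    have a: "Rv n d < ?c" unfolding Rv_eq
    proof (intro cos_lt_c pin)
      show "pi / real n < (2 * real d - 1) * pi / real n" using 3 npos by (simp add: field_simps)
      show "(2 * real d - 1) * pi / real n < 2 * pi - pi / real n" using d npos by (simp add: field_simps)
    qed
    have b: "Rv n (Suc d) \<le> ?c" unfolding Rv_eq
    proof (intro cos_le_c pin(1))
      show "0 \<le> pi / real n" using pin by simp
      show "pi / real n \<le> (2 * real (Suc d) - 1) * pi / real n" using 3 npos by (simp add: field_simps)
      have "2 * real (Suc d) - 1 \<le> 2 * real n - 1" using d by simp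
      hence "(2 * real (Suc d) - 1) * pi / real n \<le> (2 * real n - 1) * pi / real n"
        using npos by (intro divide_right_mono mult_right_mono) simp_all
      also have "\<dots> = 2 * pi - pi / real n" using npos by (simp add: field_simps)
      finally show "(2 * real (Suc d) - 1) * pi / real n \<le> 2 * pi - pi / real n" .
    qed
    have "(1-y) * Rv n d < (1-y) * ?c" using a y by simp
    moreover have "y * Rv n (Suc d) \<le> y * ?c" using b y by (simp add: mult_left_mono)
    ultimately have "(1-y) * Rv n d + y * Rv n (Suc d) < ?c" by (simp add: algebra_simps)
    thus ?thesis using L' by simp
  qed
qed


lemma pv_ne0[simp]: "poly_vert n k \<noteq> 0"
  using pv_norm[of n k] by (metis norm_zero zero_neq_one)

lemma inj_aux:
  assumes n: "n \<ge> 3" and x: "0 \<le> x" "x < 1" and y: "0 \<le> y" "y < 1" and K: "K \<le> K'" "K' < n"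
    and e: "poly_pt n ((real K + x) / n) = poly_pt n ((real K' + y) / n)"
  shows "K = K' \<and> x = y"
proof -
  have n0: "n > 0" using n by simp
  define d where "d = K' - K"
  have K': "K' = K + d" using K d_def by simp
  have dn: "d < n" using K d_def by simp
  have x1: "x \<le> 1" "y \<le> 1" using x y by simp_all
  have e1: "poly_pt n ((real K + x) / n) = of_real (1 - x) * poly_vert n K + of_real x * poly_vert n (Suc K)"
    by (rule piece[OF n0 x(1) x1(1)])
  have e2: "poly_pt n ((real K' + y) / n) = of_real (1 - y) * poly_vert n K' + of_real y * poly_vert n (Suc K')"
    by (rule piece[OF n0 y(1) x1(2)])
  have p1: "poly_vert n (Suc K) = poly_vert n K * poly_vert n 1" using pv_add[of n K 1] by simp
  have p2: "poly_vert n K' = poly_vert n K * poly_vert n d" using pv_add[of n K d] K' by simp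
  have p3: "poly_vert n (Suc K') = poly_vert n K * poly_vert n (Suc d)" using pv_add[of n K "Suc d"] K' by simp
  have "poly_vert n K * (of_real (1-x) * poly_vert n 0 + of_real x * poly_vert n 1)
      = poly_vert n K * (of_real (1-y) * poly_vert n d + of_real y * poly_vert n (Suc d))"
    using e unfolding e1 e2 p1 p2 p3 by (simp add: algebra_simps)
  hence "of_real (1-x) * poly_vert n 0 + of_real x * poly_vert n 1 = of_real (1-y) * poly_vert n d + of_real y * poly_vert n (Suc d)"
    by (rule mult_left_cancel[THEN iffD1, rotated]) simp
  from inj0[OF n x y dn this] have "d = 0 \<and> x = y" .
  thus ?thesis using K' by simp
qed

lemma gam_inj:
  assumes n: "n \<ge> 3" and a: "0 \<le> a" "a < 1" and b: "0 \<le> b" "b < 1"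
    and e: "poly_pt n a = poly_pt n b"
  shows "a = b"
proof -
  have n0: "n > 0" using n by simp
  obtain K x where ax: "a = (real K + x) / real n" "0 \<le> x" "x < 1" using decomp[OF n0 a(1)] .
  obtain K' y where by': "b = (real K' + y) / real n" "0 \<le> y" "y < 1" using decomp[OF n0 b(1)] .
  have "a * real n < real n" "b * real n < real n" using a b n0 by simp_all
  moreover have "a * real n = real K + x" "b * real n = real K' + y" using ax by' n0 by simp_all
  ultimately have "K < n" "K' < n" using ax by' by linarith+
  show ?thesis
  proof (cases "K \<le> K'")
    case True
    from inj_aux[OF n ax(2,3) by'(2,3) True \<open>K' < n\<close>] e ax by' show ?thesis by simp
  next
    case False
    have "K' \<le> K" using False by simp
    from inj_aux[OF n by'(2,3) ax(2,3) this \<open>K < n\<close>] e ax by' show ?thesis by simp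
  qed
qed

lemma pos_gam:
  assumes n: "n \<ge> 3" and t: "0 \<le> t" "t < 1"
  shows "poly_pos n (poly_pt n t) = t"
  unfolding poly_pos_def
proof (rule the_equality)
  show "t \<in> {0..<1} \<and> poly_pt n t = poly_pt n t" using t by simp
  fix s assume "s \<in> {0..<1} \<and> poly_pt n s = poly_pt n t"
  thus "s = t" using gam_inj[OF n _ _ t, of s] by simp
qed

lemma Pn_pos:
  assumes n: "n \<ge> 3" and p: "p \<in> Pn n"
  shows "poly_pos n p \<in> {0..<1}" "poly_pt n (poly_pos n p) = p"
proof -
  have "p \<in> poly_pt n ` {0..<1}" using p Pn_gam[of n] n by simp
  then obtain t where t: "t \<in> {0..<1}" "p = poly_pt n t" by (auto simp del: atLeastLessThan_iff)
  have "poly_pos n p = t" using pos_gam[OF n, of t] t by simp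
  thus "poly_pos n p \<in> {0..<1}" "poly_pt n (poly_pos n p) = p" using t by simp_all
qed

lemma dP_gam:
  assumes n: "n \<ge> 3" and a: "0 \<le> a" "a < 1" and b: "0 \<le> b" "b < 1"
  shows "dP n (poly_pt n a) (poly_pt n b) = frac (b - a)"
  unfolding dP_def using pos_gam[OF n a] pos_gam[OF n b] by simp

lemma dP_shift:
  assumes n: "n \<ge> 3" and a: "0 \<le> a" "a < 1" and t: "0 \<le> t" "t < 1"
  shows "dP n (poly_pt n a) (poly_pt n (a + t)) = t"
proof -
  have n0: "n > 0" using n by simp
  have "poly_pt n (a + t) = poly_pt n (frac (a + t))" by (rule gam_frac[OF n0]) (use a t in simp)
  moreover have "frac (frac (a + t) - a) = t"
  proof -
    have "frac (a + t) - a = t - of_int \<lfloor>a + t\<rfloor>" by (simp add: frac_def)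
    hence "frac (frac (a + t) - a) = frac t" by (simp add: frac_def)
    thus ?thesis using t by (simp add: frac_eq)
  qed
  ultimately show ?thesis using dP_gam[OF n a frac_ge_0[of "a+t"] frac_lt_1[of "a+t"]] by metis
qed

lemma Pn_shift:
  assumes n: "n \<ge> 3" and a: "0 \<le> a" "a < 1" and w: "w \<in> Pn n"
  shows "poly_pt n (a + dP n (poly_pt n a) w) = w" "dP n (poly_pt n a) w \<in> {0..<1}"
proof -
  have n0: "n > 0" using n by simp
  define b where "b = poly_pos n w"
  have b: "0 \<le> b" "b < 1" "poly_pt n b = w" using Pn_pos[OF n w] unfolding b_def by auto
  have dd: "dP n (poly_pt n a) w = frac (b - a)" using dP_gam[OF n a b(1,2)] b(3) by simp
  thus "dP n (poly_pt n a) w \<in> {0..<1}" using frac_lt_1[of "b-a"] frac_ge_0[of "b-a"] by simp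
  show "poly_pt n (a + dP n (poly_pt n a) w) = w"
  proof (cases "a \<le> b")
    case True
    hence "frac (b - a) = b - a" using a b by (simp add: frac_eq)
    hence "a + dP n (poly_pt n a) w = b" using dd by simp
    thus ?thesis using b(3) by simp
  next
    case False
    have "frac (b - a) = b - a + 1" using False a b by (subst frac_unique_iff) simp
    hence "a + dP n (poly_pt n a) w = b + real 1" using dd by simp
    thus ?thesis using gam_per[OF n0 b(1), of 1] b(3) by simp
  qed
qed


lemma norm_affine_max:
  fixes A B :: complex
  assumes "x0 \<le> x" "x \<le> x1"
  shows "norm (A + of_real x * B) \<le> max (norm (A + of_real x0 * B)) (norm (A + of_real x1 * B))"
proof (cases "x0 = x1")
  case True thus ?thesis using assms by simp
next
  case False
  hence lt: "x0 < x1" using assms by simp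
  define l where "l = (x - x0) / (x1 - x0)"
  have l: "0 \<le> l" "l \<le> 1" using assms lt unfolding l_def by (simp_all add: field_simps)
  have h: "l * (x1 - x0) = x - x0" using lt unfolding l_def by simp
  have "(1 - l) * x0 + l * x1 = x0 + l * (x1 - x0)" by (simp add: algebra_simps)
  hence xl: "x = (1 - l) * x0 + l * x1" using h by simp
  have "A + of_real x * B = of_real (1 - l) * (A + of_real x0 * B) + of_real l * (A + of_real x1 * B)"
    unfolding xl by (simp add: algebra_simps)
  hence "norm (A + of_real x * B) \<le> norm (of_real (1 - l) * (A + of_real x0 * B)) + norm (of_real l * (A + of_real x1 * B))"
    by (metis norm_triangle_ineq)
  also have "\<dots> = (1 - l) * norm (A + of_real x0 * B) + l * norm (A + of_real x1 * B)"
    using l by (simp only: norm_mult norm_of_real abs_of_nonneg diff_ge_0_iff_ge)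
  also have "\<dots> \<le> (1 - l) * max (norm (A + of_real x0 * B)) (norm (A + of_real x1 * B)) + l * max (norm (A + of_real x0 * B)) (norm (A + of_real x1 * B))"
    using l by (intro add_mono mult_left_mono) simp_all
  also have "\<dots> = max (norm (A + of_real x0 * B)) (norm (A + of_real x1 * B))" by (simp add: algebra_simps)
  finally show ?thesis .
qed

lemma reflect_eq:
  "norm (of_real y + of_real (1 - y) * poly_vert n 1 - poly_vert n (Suc m))
   = norm (1 - (of_real (1 - y) * poly_vert n m + of_real y * poly_vert n (Suc m)))"
proof -
  let ?E = "of_real y + of_real (1 - y) * poly_vert n 1 - poly_vert n (Suc m)"
  have c1: "cnj (poly_vert n 1) * poly_vert n (Suc m) = poly_vert n m" using pv_cnj[of n 1 m] by simp
  have c2: "cnj (poly_vert n (Suc m)) * poly_vert n (Suc m) = 1" using pv_cnj[of n "Suc m" 0] by simp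
  have "poly_vert n (Suc m) * cnj ?E = of_real y * poly_vert n (Suc m) + of_real (1 - y) * (cnj (poly_vert n 1) * poly_vert n (Suc m)) - cnj (poly_vert n (Suc m)) * poly_vert n (Suc m)"
    by (simp add: algebra_simps)
  also have "\<dots> = - (1 - (of_real (1 - y) * poly_vert n m + of_real y * poly_vert n (Suc m)))"
    unfolding c1 c2 by (simp add: algebra_simps)
  finally have "norm (poly_vert n (Suc m) * cnj ?E) = norm (1 - (of_real (1 - y) * poly_vert n m + of_real y * poly_vert n (Suc m)))"
    by (metis norm_minus_cancel)
  moreover have "norm ?E = norm (poly_vert n (Suc m) * cnj ?E)"
    by (simp only: norm_mult pv_norm complex_mod_cnj mult_1_left)
  ultimately show ?thesis by simp
qed

lemma chord0:
  assumes n: "n > 0" and x: "0 \<le> x" "x < 1" and t: "0 \<le> t"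
  shows "norm (poly_pt n (x / n) - poly_pt n (x / n + t)) \<le> norm (1 - poly_pt n t)"
proof -
  obtain m y where ty: "t = (real m + y) / real n" "0 \<le> y" "y < 1" using decomp[OF n t] .
  let ?w = "poly_vert n 1" and ?a = "poly_vert n m" and ?b = "poly_vert n (Suc m)" and ?c = "poly_vert n (Suc (Suc m))"
  have gt: "poly_pt n t = of_real (1 - y) * ?a + of_real y * ?b"
    unfolding ty(1) by (rule piece[OF n ty(2)]) (use ty in simp)
  have gx: "poly_pt n (x / n) = of_real (1 - x) + of_real x * ?w"
    using piece[OF n x(1), of 0] x by simp
  have bw: "?b = ?w * ?a" "?c = ?w * ?b" using pv_add[of n 1 m] pv_add[of n 1 "Suc m"] by simp_all
  have refl: "norm (of_real y + of_real (1 - y) * ?w - ?b) = norm (1 - poly_pt n t)"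
    unfolding gt by (rule reflect_eq)
  show ?thesis
  proof (cases "x + y \<le> 1")
    case True
    have "x / n + t = (real m + (x + y)) / n" using ty(1) by (simp add: add_divide_distrib)
    hence g2: "poly_pt n (x / n + t) = of_real (1 - (x + y)) * ?a + of_real (x + y) * ?b"
      using piece[OF n _ True, of m] x ty by simp
    define A where "A = 1 - (of_real (1 - y) * ?a + of_real y * ?b)"
    define B where "B = ?w - 1 + ?a - ?b"
    have D: "\<And>z. of_real (1 - z) + of_real z * ?w - (of_real (1 - (z + y)) * ?a + of_real (z + y) * ?b) = A + of_real z * B"
      unfolding A_def B_def by (simp add: algebra_simps)
    have "norm (poly_pt n (x / n) - poly_pt n (x / n + t)) = norm (A + of_real x * B)"
      unfolding gx g2 D ..
    also have "\<dots> \<le> max (norm (A + of_real 0 * B)) (norm (A + of_real (1 - y) * B))"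
      by (rule norm_affine_max) (use x True in simp_all)
    also have "norm (A + of_real 0 * B) = norm (1 - poly_pt n t)" unfolding A_def gt by simp
    also have "A + of_real (1 - y) * B = of_real y + of_real (1 - y) * ?w - ?b"
      using D[of "1 - y"] by simp
    finally show ?thesis using refl by simp
  next
    case False
    have "x / n + t = (real (Suc m) + (x + y - 1)) / n" using ty(1) by (simp add: add_divide_distrib)
    hence g2: "poly_pt n (x / n + t) = of_real (1 - (x + y - 1)) * ?b + of_real (x + y - 1) * ?c"
      using piece[OF n, of "x + y - 1" "Suc m"] x ty False by simp
    define A where "A = 1 - (of_real (2 - y) * ?b + of_real (y - 1) * ?c)"
    define B where "B = ?w - 1 + ?b - ?c"
    have D: "\<And>z. of_real (1 - z) + of_real z * ?w - (of_real (1 - (z + y - 1)) * ?b + of_real (z + y - 1) * ?c) = A + of_real z * B"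
      unfolding A_def B_def by (simp add: algebra_simps)
    have "norm (poly_pt n (x / n) - poly_pt n (x / n + t)) = norm (A + of_real x * B)"
      unfolding gx g2 D ..
    also have "\<dots> \<le> max (norm (A + of_real (1 - y) * B)) (norm (A + of_real 1 * B))"
      by (rule norm_affine_max) (use x False in simp_all)
    also have "A + of_real (1 - y) * B = of_real y + of_real (1 - y) * ?w - ?b"
      using D[of "1 - y"] by simp
    also have "A + of_real 1 * B = ?w * (1 - poly_pt n t)"
      using D[of 1] unfolding gt bw by (simp add: algebra_simps)
    also have "norm (?w * (1 - poly_pt n t)) = norm (1 - poly_pt n t)" by (simp add: norm_mult)
    finally show ?thesis using refl by simp
  qed
qed

lemma chord:
  assumes n: "n > 0" and a: "0 \<le> a" and t: "0 \<le> t"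
  shows "norm (poly_pt n a - poly_pt n (a + t)) \<le> norm (1 - poly_pt n t)"
proof -
  obtain K x where ax: "a = (real K + x) / real n" "0 \<le> x" "x < 1" using decomp[OF n a] .
  have a1: "a = x / n + real K / n" using ax(1) by (simp add: add_divide_distrib)
  have "poly_pt n a = poly_vert n K * poly_pt n (x / n)"
    unfolding a1 by (rule gam_rot[OF n]) (use ax in simp)
  moreover have "poly_pt n (a + t) = poly_vert n K * poly_pt n (x / n + t)"
    using gam_rot[OF n, of "x / n + t" K] ax t a1 by (simp add: algebra_simps)
  ultimately have "norm (poly_pt n a - poly_pt n (a + t)) = norm (poly_pt n (x / n) - poly_pt n (x / n + t))"
    by (simp add: norm_mult right_diff_distrib[symmetric])
  also have "\<dots> \<le> norm (1 - poly_pt n t)" by (rule chord0[OF n ax(2,3) t])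
  finally show ?thesis .
qed

lemma chord_vert:
  assumes n: "n > 0" and t: "0 \<le> t"
  shows "norm (poly_vert n k - poly_pt n (real k / n + t)) = norm (1 - poly_pt n t)"
proof -
  have "poly_pt n (real k / n + t) = poly_vert n k * poly_pt n t"
    using gam_rot[OF n t, of k] by (simp add: add.commute)
  hence "poly_vert n k - poly_pt n (real k / n + t) = poly_vert n k * (1 - poly_pt n t)"
    by (simp add: algebra_simps)
  thus ?thesis by (simp add: norm_mult)
qed


lemma Hcont:
  assumes n: "n > 0" and a: "0 \<le> a" "a \<le> 1"
  shows "continuous_on {0..1} (\<lambda>\<tau>. norm (q - poly_pt n (a + \<tau>)))"
proof -
  have "continuous_on {0..2} (poly_pt n)" using gam_cont[OF n, of 2 2] by simp
  moreover have "continuous_on {0..1} (\<lambda>\<tau>. a + \<tau>)" by (intro continuous_intros)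
  moreover have "(\<lambda>\<tau>. a + \<tau>) ` {0..1} \<subseteq> {0..2}" using a by auto
  ultimately have "continuous_on {0..1} (\<lambda>\<tau>. poly_pt n (a + \<tau>))"
    using continuous_on_compose2 by blast
  thus ?thesis by (intro continuous_intros)
qed

lemma gmap_char:
  assumes n: "n \<ge> 3" and r: "r > 0" and p: "p \<in> Pn n"
    and T: "T = {\<tau> \<in> {0..1}. norm (p - poly_pt n (poly_pos n p + \<tau>)) = r}" and ne: "T \<noteq> {}"
  shows "Inf T \<in> T" "dP n p (g_map n r p) = Inf T"
proof -
  have n0: "n > 0" using n by simp
  define a where "a = poly_pos n p"
  have a: "0 \<le> a" "a < 1" "poly_pt n a = p" using Pn_pos[OF n p] unfolding a_def by auto
  have Hc: "continuous_on {0..1} (\<lambda>\<tau>. norm (p - poly_pt n (a + \<tau>)))" by (rule Hcont[OF n0]) (use a in auto)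
  have cl: "closed T" unfolding T a_def[symmetric]
    by (rule continuous_closed_preimage_constant[OF Hc]) simp
  have bb: "bdd_below T" unfolding T by (rule bdd_belowI[of _ 0]) auto
  show TT: "Inf T \<in> T" by (rule closed_contains_Inf[OF ne bb cl])
  define ts where "ts = Inf T"
  have ts: "0 \<le> ts" "ts \<le> 1" "norm (p - poly_pt n (a + ts)) = r" using TT unfolding ts_def T a_def by auto
  have "ts \<noteq> 1"
  proof
    assume "ts = 1"
    hence "norm (p - poly_pt n (a + real 1)) = r" using ts by simp
    thus False using gam_per[OF n0 a(1), of 1] a r by simp
  qed
  hence ts1: "ts < 1" using ts by simp
  define w0 where "w0 = poly_pt n (a + ts)"
  have dw0: "dP n p w0 = ts" unfolding w0_def a(3)[symmetric] by (rule dP_shift[OF n a(1,2) ts(1) ts1])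
  have low: "\<And>w'. w' \<in> Pn n \<Longrightarrow> norm (p - w') = r \<Longrightarrow> ts \<le> dP n p w'"
  proof -
    fix w' assume w': "w' \<in> Pn n" "norm (p - w') = r"
    have "poly_pt n (a + dP n p w') = w'" "dP n p w' \<in> {0..<1}"
      using Pn_shift[OF n a(1,2) w'(1)] a(3) by auto
    hence "dP n p w' \<in> T" unfolding T a_def[symmetric] using w'(2) by auto
    thus "ts \<le> dP n p w'" unfolding ts_def by (rule cInf_lower[OF _ bb])
  qed
  have P0: "w0 \<in> Pn n \<and> norm (p - w0) = r \<and> (\<forall>w'\<in>Pn n. norm (p - w') = r \<longrightarrow> dP n p w0 \<le> dP n p w')"
    using gam_in_Pn[OF n0, of "a + ts"] a ts low dw0 unfolding w0_def by auto
  have "g_map n r p = w0" unfolding g_map_def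
  proof (rule the_equality)
    show "w0 \<in> Pn n \<and> norm (p - w0) = r \<and> (\<forall>w'\<in>Pn n. norm (p - w') = r \<longrightarrow> dP n p w0 \<le> dP n p w')" by (rule P0)
  next
    fix w assume w: "w \<in> Pn n \<and> norm (p - w) = r \<and> (\<forall>w'\<in>Pn n. norm (p - w') = r \<longrightarrow> dP n p w \<le> dP n p w')"
    hence "dP n p w \<le> ts" using P0 dw0 by auto
    moreover have "ts \<le> dP n p w" using low w by auto
    ultimately have "dP n p w = ts" by simp
    moreover have "poly_pt n (a + dP n p w) = w" using Pn_shift[OF n a(1,2)] w a(3) by auto
    ultimately show "w = w0" unfolding w0_def by simp
  qed
  thus "dP n p (g_map n r p) = Inf T" using dw0 unfolding ts_def by (simp only:)
qed

lemma rcrit_le: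
  assumes f: "\<not> vr_cyclic n rf" and rf: "rf > 0"
  shows "r_crit n \<le> rf"
  unfolding r_crit_def
proof (rule cSup_least)
  show "{r. 0 \<le> r \<and> (\<forall>r'. 0 < r' \<and> r' < r \<longrightarrow> vr_cyclic n r')} \<noteq> {}" by auto
next
  fix x assume "x \<in> {r. 0 \<le> r \<and> (\<forall>r'. 0 < r' \<and> r' < r \<longrightarrow> vr_cyclic n r')}"
  hence x: "\<forall>r'. 0 < r' \<and> r' < x \<longrightarrow> vr_cyclic n r'" by simp
  show "x \<le> rf"
  proof (rule ccontr)
    assume "\<not> x \<le> rf"
    hence "vr_cyclic n rf" using x rf by simp
    thus False using f by simp
  qed
qed




lemma fail_gen:
  assumes n: "n \<ge> 3" and p: "0 \<le> p0" "p0 < pw" "pw < p1" "p1 < 1" "2 * (p1 - p0) < 1"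
    and nl: "norm (poly_pt n p0 - poly_pt n p1) < norm (poly_pt n p0 - poly_pt n pw)"
  shows "\<not> vr_cyclic n (norm (poly_pt n p0 - poly_pt n pw))"
proof
  assume cyc: "vr_cyclic n (norm (poly_pt n p0 - poly_pt n pw))"
  have n0: "n > 0" using n by simp
  define u0 where "u0 = poly_pt n p0"
  define u1 where "u1 = poly_pt n p1"
  define w where "w = poly_pt n pw"
  define rf where "rf = norm (u0 - w)"
  have inP: "u0 \<in> Pn n" "u1 \<in> Pn n" "w \<in> Pn n" unfolding u0_def u1_def w_def
    using gam_in_Pn[OF n0] p by auto
  have d01: "dP n u0 u1 = p1 - p0" unfolding u0_def u1_def
    using dP_gam[OF n, of p0 p1] p by (simp add: frac_eq)
  have d10: "dP n u1 u0 = p0 - p1 + 1" unfolding u0_def u1_def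
    using dP_gam[OF n, of p1 p0] p by (simp add: frac_unique_iff)
  have d0w: "dP n u0 w = pw - p0" unfolding u0_def w_def
    using dP_gam[OF n, of p0 pw] p by (simp add: frac_eq)
  have ne: "u0 \<noteq> u1"
  proof
    assume "u0 = u1"
    hence "dP n u0 u1 = 0" unfolding dP_def by simp
    thus False using d01 p by simp
  qed
  have e: "vr_edge n rf u0 u1" unfolding vr_edge_def rf_def
    using inP ne nl d01 d10 p unfolding u0_def u1_def w_def by auto
  have b: "ccw_between n u0 w u1" unfolding ccw_between_def d0w d01 using p by simp
  have "vr_edge n rf u0 w" using cyc e b inP unfolding vr_cyclic_def rf_def u0_def w_def by blast
  thus False unfolding vr_edge_def rf_def by simp
qed


lemma trig_basics:
  fixes n :: nat
  assumes n: "n \<ge> 3"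
  shows "0 < cos (pi / n)" "cos (pi / n) < 1" "0 < sin (pi / n)"
    "(sin (pi / n))\<^sup>2 = 1 - (cos (pi / n))\<^sup>2"
proof -
  have a: "0 < pi / n" "pi / n < pi / 2" using n by (simp_all add: field_simps)
  show "0 < cos (pi / n)" using a by (intro cos_gt_zero_pi) simp_all
  have h: "pi / n \<le> pi" using a(2) pi_gt_zero by linarith
  have "cos (pi / n) < cos 0" by (subst cos_mono_less_eq; use a h pi_gt_zero in linarith)
  then show "cos (pi / n) < 1" by simp
  have h2: "pi / n < pi" using a(2) pi_gt_zero by linarith
  show "0 < sin (pi / n)" by (rule sin_gt_zero[OF a(1) h2])
  show "(sin (pi / n))\<^sup>2 = 1 - (cos (pi / n))\<^sup>2" by (simp add: sin_squared_eq)
qed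

lemma pv1_cs: "poly_vert n 1 = Complex ((cos (pi / n))\<^sup>2 - (sin (pi / n))\<^sup>2) (2 * sin (pi / n) * cos (pi / n))"
proof -
  have "cos (2 * (pi / n)) = (cos (pi / n))\<^sup>2 - (sin (pi / n))\<^sup>2" "sin (2 * (pi / n)) = 2 * sin (pi / n) * cos (pi / n)"
    by (rule cos_double, rule sin_double)
  thus ?thesis unfolding poly_vert_def by (simp add: complex_eq_iff)
qed

lemma gam_half: "n > 0 \<Longrightarrow> poly_pt n ((1/2) / n) = of_real (1/2) + of_real (1/2) * poly_vert n 1"
  using piece[of n "1/2" 0] by simp

lemma par_help:
  fixes n :: nat and a b c :: real
  assumes "n > 0" "0 \<le> a" "a < b" "b < c" "c < real n" "2 * (c - a) < real n"
  shows "0 \<le> a / n" "a / n < b / n" "b / n < c / n" "c / n < 1" "2 * (c / n - a / n) < 1"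
  using assms by (simp_all add: field_simps)

lemma seg_param:
  assumes n: "n > 0" and q: "q \<in> Pn n"
  obtains K x where "0 \<le> x" "x \<le> 1" "q = poly_vert n K * (of_real (1 - x) + of_real x * poly_vert n 1)"
proof -
  obtain K where K: "x \<in> closed_segment (poly_vert n K) (poly_vert n (Suc K))" if "q = x" for x
    using q unfolding Pn_def by auto
  then obtain x where x: "0 \<le> x" "x \<le> 1" "q = (1 - x) *\<^sub>R poly_vert n K + x *\<^sub>R poly_vert n (Suc K)"
    unfolding closed_segment_def by auto
  have "q = poly_vert n K * (of_real (1 - x) + of_real x * poly_vert n 1)"
    using x(3) pv_add[of n K 1] by (simp add: scaleR_conv_of_real algebra_simps)
  thus ?thesis using that x by blast
qed


lemma cis_pi_plus: "cis (pi + x) = - cis x"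
  by (simp add: complex_eq_iff)

lemma cis_pi_minus: "cis (pi - x) = Complex (- cos x) (sin x)"
  by (simp add: complex_eq_iff)

lemma cdiff: "Complex a b - Complex c d = Complex (a - c) (b - d)"
  by (simp add: complex_eq_iff)

lemma far_odd:
  assumes n: "n \<ge> 3" and j: "n = 2 * j + 1"
  shows "\<exists>rf>0. \<not> vr_cyclic n rf \<and> (\<forall>q\<in>Pn n. \<exists>w\<in>Pn n. rf \<le> norm (q - w))"
proof -
  have n0: "n > 0" using n by simp
  define c where "c = cos (pi / n)"
  define s where "s = sin (pi / n)"
  have cs: "0 < c" "c < 1" "0 < s" "s\<^sup>2 = 1 - c\<^sup>2" using trig_basics[OF n] unfolding c_def s_def by auto
  have j1: "j \<ge> 1" using n j by simp
  have rn: "real n = 2 * real j + 1" using j by simp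
  have e1: "2 * pi * real j / real n = pi - pi / real n" using rn by (simp add: field_simps)
  have e2: "2 * pi * real (Suc j) / real n = pi + pi / real n" using rn by (simp add: field_simps)
  have pvj: "poly_vert n j = Complex (- c) s" unfolding poly_vert_def e1 cis_pi_minus c_def s_def ..
  have pvj1: "poly_vert n (Suc j) = Complex (- c) (- s)" unfolding poly_vert_def e2 cis_pi_plus c_def s_def
    by (simp add: complex_eq_iff)
  have pv1: "poly_vert n 1 = Complex (c\<^sup>2 - s\<^sup>2) (2 * s * c)" unfolding c_def s_def by (rule pv1_cs)
  define t where "t = (1 - c) / 2"
  have t: "0 < t" "t < 1/2" using cs unfolding t_def by simp_all
  define p0 where "p0 = (1/2) / real n"
  define pw where "pw = real j / real n"
  define p1 where "p1 = (real j + t) / real n"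
  have u0: "poly_pt n p0 = Complex ((1 + c\<^sup>2 - s\<^sup>2) / 2) (s * c)"
    unfolding p0_def gam_half[OF n0] pv1 by (simp add: complex_eq_iff)
  have uw: "poly_pt n pw = Complex (- c) s" unfolding pw_def gam_vert[OF n0] pvj ..
  have u1: "poly_pt n p1 = Complex (- c) (s * c)"
  proof -
    have "poly_pt n p1 = of_real (1 - t) * poly_vert n j + of_real t * poly_vert n (Suc j)"
      unfolding p1_def by (rule piece[OF n0]) (use t in simp_all)
    also have "\<dots> = Complex (- c) (s * (1 - 2 * t))" unfolding pvj pvj1
      by (simp add: complex_eq_iff algebra_simps)
    also have "s * (1 - 2 * t) = s * c" unfolding t_def by (simp add: field_simps)
    finally show ?thesis .
  qed
  define A where "A = c\<^sup>2 + c"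
  have A: "(1 + c\<^sup>2 - s\<^sup>2) / 2 + c = A" unfolding A_def using cs(4) by simp
  have d0w: "norm (poly_pt n p0 - poly_pt n pw) = sqrt (A\<^sup>2 + (s * c - s)\<^sup>2)"
    unfolding u0 uw cdiff complex_norm using A by simp
  have d01: "norm (poly_pt n p0 - poly_pt n p1) = sqrt (A\<^sup>2)"
    unfolding u0 u1 cdiff complex_norm using A by simp
  have pos: "(s * c - s)\<^sup>2 > 0" using cs by simp
  have lt: "norm (poly_pt n p0 - poly_pt n p1) < norm (poly_pt n p0 - poly_pt n pw)"
    unfolding d0w d01 by (rule real_sqrt_less_mono) (use pos in simp)
  have par: "0 \<le> p0" "p0 < pw" "pw < p1" "p1 < 1" "2 * (p1 - p0) < 1"
  proof -
    have h: "(0::real) \<le> 1/2" "1/2 < real j" "real j < real j + t" "real j + t < real n" "2 * ((real j + t) - 1/2) < real n"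
      using j1 t rn by simp_all
    show "0 \<le> p0" "p0 < pw" "pw < p1" "p1 < 1" "2 * (p1 - p0) < 1"
      unfolding p0_def pw_def p1_def using par_help[OF n0 h] by simp_all
  qed
  define rf where "rf = norm (poly_pt n p0 - poly_pt n pw)"
  have fail: "\<not> vr_cyclic n rf" unfolding rf_def by (rule fail_gen[OF n par lt])
  have rfpos: "rf > 0" using lt unfolding rf_def by (meson le_less_trans norm_ge_zero)
  have rfb: "rf \<le> 1 + c"
  proof -
    have "A\<^sup>2 + (s * c - s)\<^sup>2 = (1 + c)\<^sup>2 - 4 * c * (1 - c) * (1 + c)"
      unfolding A_def using cs(4) by algebra
    also have "\<dots> \<le> (1 + c)\<^sup>2" using cs by simp
    finally have X: "A\<^sup>2 + (s * c - s)\<^sup>2 \<le> (1 + c)\<^sup>2" .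
    have "rf \<le> sqrt ((1 + c)\<^sup>2)" unfolding rf_def d0w using X by (rule real_sqrt_le_mono)
    thus ?thesis using cs by simp
  qed
  have far: "\<forall>q\<in>Pn n. \<exists>w\<in>Pn n. rf \<le> norm (q - w)"
  proof
    fix q assume q: "q \<in> Pn n"
    obtain K x where x: "0 \<le> x" "x \<le> 1" "q = poly_vert n K * (of_real (1 - x) + of_real x * poly_vert n 1)"
      using seg_param[OF n0 q] by blast
    define w where "w = poly_vert n (K + Suc j)"
    have "q - w = poly_vert n K * (of_real (1 - x) + of_real x * poly_vert n 1 - poly_vert n (Suc j))"
      unfolding w_def x(3) pv_add by (simp add: algebra_simps)
    moreover have "of_real (1 - x) + of_real x * poly_vert n 1 - poly_vert n (Suc j) = Complex (1 - x + x * (c\<^sup>2 - s\<^sup>2) + c) (x * (2 * s * c) + s)"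
      unfolding pv1 pvj1 by (simp add: complex_eq_iff)
    ultimately have "norm (q - w) = norm (Complex (1 - x + x * (c\<^sup>2 - s\<^sup>2) + c) (x * (2 * s * c) + s))"
      by (simp add: norm_mult)
    also have "\<dots> = sqrt ((1 + c)\<^sup>2 + s\<^sup>2 * (2 * x - 1)\<^sup>2)"
    proof -
      have "(1 - x + x * (c\<^sup>2 - s\<^sup>2) + c)\<^sup>2 + (x * (2 * s * c) + s)\<^sup>2 = (1 + c)\<^sup>2 + s\<^sup>2 * (2 * x - 1)\<^sup>2"
        using cs(4) by algebra
      thus ?thesis by (simp add: complex_norm)
    qed
    also have "\<dots> \<ge> sqrt ((1 + c)\<^sup>2)" by (rule real_sqrt_le_mono) simp
    finally have "sqrt ((1 + c)\<^sup>2) \<le> norm (q - w)" .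
    hence "1 + c \<le> norm (q - w)" using cs by simp
    moreover have "w \<in> Pn n" unfolding w_def by (rule pv_in_Pn[OF n0])
    ultimately show "\<exists>w\<in>Pn n. rf \<le> norm (q - w)" using rfb by force
  qed
  show ?thesis using fail rfpos far by blast
qed


lemma far_even:
  assumes n: "n \<ge> 3" and j: "n = 2 * j"
  shows "\<exists>rf>0. \<not> vr_cyclic n rf \<and> (\<forall>q\<in>Pn n. \<exists>w\<in>Pn n. rf \<le> norm (q - w))"
proof -
  have n0: "n > 0" using n by simp
  define c where "c = cos (pi / n)"
  define s where "s = sin (pi / n)"
  have cs: "0 < c" "c < 1" "0 < s" "s\<^sup>2 = 1 - c\<^sup>2" using trig_basics[OF n] unfolding c_def s_def by auto
  have j1: "j \<ge> 2" using n j by simp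
  have rn: "real n = 2 * real j" using j by simp
  have e1: "2 * pi * real j / real n = pi" using rn j1 by (simp add: field_simps)
  have e2: "2 * pi * real (Suc j) / real n = pi + 2 * pi * real 1 / real n" using rn j1 by (simp add: field_simps)
  have pvj: "poly_vert n j = Complex (- 1) 0" unfolding poly_vert_def e1 by (simp add: complex_eq_iff)
  have pv1: "poly_vert n 1 = Complex (c\<^sup>2 - s\<^sup>2) (2 * s * c)" unfolding c_def s_def by (rule pv1_cs)
  have pvj1: "poly_vert n (Suc j) = - poly_vert n 1" unfolding poly_vert_def e2 cis_pi_plus ..
  define p0 where "p0 = (1/2) / real n"
  define pw where "pw = real j / real n"
  define p1 where "p1 = (real j + 1/4) / real n"
  have u0: "poly_pt n p0 = Complex ((1 + c\<^sup>2 - s\<^sup>2) / 2) (s * c)"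
    unfolding p0_def gam_half[OF n0] pv1 by (simp add: complex_eq_iff)
  have uw: "poly_pt n pw = Complex (- 1) 0" unfolding pw_def gam_vert[OF n0] pvj ..
  have u1: "poly_pt n p1 = Complex (- 3/4 - (c\<^sup>2 - s\<^sup>2) / 4) (- (2 * s * c) / 4)"
  proof -
    have "poly_pt n p1 = of_real (1 - 1/4) * poly_vert n j + of_real (1/4) * poly_vert n (Suc j)"
      unfolding p1_def by (rule piece[OF n0]) simp_all
    also have "\<dots> = Complex (- 3/4 - (c\<^sup>2 - s\<^sup>2) / 4) (- (2 * s * c) / 4)" unfolding pvj pvj1 pv1
      by (simp add: complex_eq_iff)
    finally show ?thesis .
  qed
  have d0w: "norm (poly_pt n p0 - poly_pt n pw) = sqrt (1 + 3 * c\<^sup>2)"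
  proof -
    have "((1 + c\<^sup>2 - s\<^sup>2) / 2 - - 1)\<^sup>2 + (s * c - 0)\<^sup>2 = 1 + 3 * c\<^sup>2" using cs(4) by algebra
    thus ?thesis unfolding u0 uw cdiff complex_norm by simp
  qed
  have d01: "norm (poly_pt n p0 - poly_pt n p1) = sqrt ((1 + 15 * c\<^sup>2) / 4)"
  proof -
    have "((1 + c\<^sup>2 - s\<^sup>2) / 2 - (- 3/4 - (c\<^sup>2 - s\<^sup>2) / 4))\<^sup>2 + (s * c - - (2 * s * c) / 4)\<^sup>2 = (1 + 15 * c\<^sup>2) / 4"
      using cs(4) by algebra
    thus ?thesis unfolding u0 u1 cdiff complex_norm by simp
  qed
  have c2: "c\<^sup>2 < 1" using cs by (simp add: power_less_one_iff)
  have lt: "norm (poly_pt n p0 - poly_pt n p1) < norm (poly_pt n p0 - poly_pt n pw)"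
    unfolding d0w d01 by (rule real_sqrt_less_mono) (use c2 in simp)
  have par: "0 \<le> p0" "p0 < pw" "pw < p1" "p1 < 1" "2 * (p1 - p0) < 1"
  proof -
    have h: "(0::real) \<le> 1/2" "1/2 < real j" "real j < real j + 1/4" "real j + 1/4 < real n" "2 * ((real j + 1/4) - 1/2) < real n"
      using j1 rn by simp_all
    show "0 \<le> p0" "p0 < pw" "pw < p1" "p1 < 1" "2 * (p1 - p0) < 1"
      unfolding p0_def pw_def p1_def using par_help[OF n0 h] by simp_all
  qed
  define rf where "rf = norm (poly_pt n p0 - poly_pt n pw)"
  have fail: "\<not> vr_cyclic n rf" unfolding rf_def by (rule fail_gen[OF n par lt])
  have rfpos: "rf > 0" using lt unfolding rf_def by (meson le_less_trans norm_ge_zero)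
  have far: "\<forall>q\<in>Pn n. \<exists>w\<in>Pn n. rf \<le> norm (q - w)"
  proof
    fix q assume q: "q \<in> Pn n"
    obtain K x where x: "0 \<le> x" "x \<le> 1" "q = poly_vert n K * (of_real (1 - x) + of_real x * poly_vert n 1)"
      using seg_param[OF n0 q] by blast
    show "\<exists>w\<in>Pn n. rf \<le> norm (q - w)"
    proof (cases "x \<le> 1/2")
      case True
      define w where "w = poly_vert n (K + j)"
      have "q - w = poly_vert n K * (of_real (1 - x) + of_real x * poly_vert n 1 - poly_vert n j)"
        unfolding w_def x(3) pv_add by (simp add: algebra_simps)
      moreover have "of_real (1 - x) + of_real x * poly_vert n 1 - poly_vert n j = Complex (2 - x + x * (c\<^sup>2 - s\<^sup>2)) (x * (2 * s * c))"
        unfolding pv1 pvj by (simp add: complex_eq_iff)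
      ultimately have "norm (q - w) = norm (Complex (2 - x + x * (c\<^sup>2 - s\<^sup>2)) (x * (2 * s * c)))"
        by (simp add: norm_mult)
      also have "\<dots> = sqrt (4 * c\<^sup>2 + 4 * s\<^sup>2 * (1 - x)\<^sup>2)"
      proof -
        have "(2 - x + x * (c\<^sup>2 - s\<^sup>2))\<^sup>2 + (x * (2 * s * c))\<^sup>2 = 4 * c\<^sup>2 + 4 * s\<^sup>2 * (1 - x)\<^sup>2"
          using cs(4) by algebra
        thus ?thesis by (simp add: complex_norm)
      qed
      also have "\<dots> \<ge> sqrt (1 + 3 * c\<^sup>2)"
      proof (rule real_sqrt_le_mono)
        have "(1/2)\<^sup>2 \<le> (1 - x)\<^sup>2" using True by (intro power_mono) simp_all
        hence "s\<^sup>2 * (1/2)\<^sup>2 \<le> s\<^sup>2 * (1 - x)\<^sup>2" by (intro mult_left_mono) simp_all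
        moreover have "s\<^sup>2 * (1/2)\<^sup>2 = s\<^sup>2 / 4" by (simp add: power2_eq_square)
        moreover have "4 * s\<^sup>2 * (1 - x)\<^sup>2 = 4 * (s\<^sup>2 * (1 - x)\<^sup>2)" by simp
        ultimately show "1 + 3 * c\<^sup>2 \<le> 4 * c\<^sup>2 + 4 * s\<^sup>2 * (1 - x)\<^sup>2" using cs(4) by linarith
      qed
      finally have "rf \<le> norm (q - w)" unfolding rf_def d0w .
      moreover have "w \<in> Pn n" unfolding w_def by (rule pv_in_Pn[OF n0])
      ultimately show ?thesis by blast
    next
      case False
      define w where "w = poly_vert n (K + Suc j)"
      have "q - w = poly_vert n K * (of_real (1 - x) + of_real x * poly_vert n 1 - poly_vert n (Suc j))"
        unfolding w_def x(3) pv_add by (simp add: algebra_simps)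
      moreover have "of_real (1 - x) + of_real x * poly_vert n 1 - poly_vert n (Suc j) = Complex (1 - x + (1 + x) * (c\<^sup>2 - s\<^sup>2)) ((1 + x) * (2 * s * c))"
        unfolding pvj1 pv1 by (simp add: complex_eq_iff algebra_simps)
      ultimately have "norm (q - w) = norm (Complex (1 - x + (1 + x) * (c\<^sup>2 - s\<^sup>2)) ((1 + x) * (2 * s * c)))"
        by (simp add: norm_mult)
      also have "\<dots> = sqrt (4 * c\<^sup>2 + 4 * s\<^sup>2 * x\<^sup>2)"
      proof -
        have "(1 - x + (1 + x) * (c\<^sup>2 - s\<^sup>2))\<^sup>2 + ((1 + x) * (2 * s * c))\<^sup>2 = 4 * c\<^sup>2 + 4 * s\<^sup>2 * x\<^sup>2"
          using cs(4) by algebra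
        thus ?thesis by (simp add: complex_norm)
      qed
      also have "\<dots> \<ge> sqrt (1 + 3 * c\<^sup>2)"
      proof (rule real_sqrt_le_mono)
        have "(1/2)\<^sup>2 \<le> x\<^sup>2" using False by (intro power_mono) simp_all
        hence "s\<^sup>2 * (1/2)\<^sup>2 \<le> s\<^sup>2 * x\<^sup>2" by (intro mult_left_mono) simp_all
        moreover have "s\<^sup>2 * (1/2)\<^sup>2 = s\<^sup>2 / 4" by (simp add: power2_eq_square)
        moreover have "4 * s\<^sup>2 * x\<^sup>2 = 4 * (s\<^sup>2 * x\<^sup>2)" by simp
        ultimately show "1 + 3 * c\<^sup>2 \<le> 4 * c\<^sup>2 + 4 * s\<^sup>2 * x\<^sup>2" using cs(4) by linarith
      qed
      finally have "rf \<le> norm (q - w)" unfolding rf_def d0w .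
      moreover have "w \<in> Pn n" unfolding w_def by (rule pv_in_Pn[OF n0])
      ultimately show ?thesis by blast
    qed
  qed
  show ?thesis using fail rfpos far by blast
qed

lemma far_fail: "n \<ge> 3 \<Longrightarrow> \<exists>rf>0. \<not> vr_cyclic n rf \<and> (\<forall>q\<in>Pn n. \<exists>w\<in>Pn n. rf \<le> norm (q - w))"
proof -
  assume n: "n \<ge> 3"
  obtain j where "n = 2 * j \<or> n = 2 * j + 1" by (metis odd_two_times_div_two_succ even_two_times_div_two)
  thus ?thesis using far_even[OF n] far_odd[OF n] by blast
qed


theorem lemma5p4:
  fixes n :: nat and r :: real and v p :: complex
  assumes "n \<ge> 3" and "0 < r" and "r < r_crit n"
    and "v \<in> poly_vert n ` {..<n}" and "p \<in> Pn n"
  shows "dP n v (g_map n r v) \<le> dP n p (g_map n r p)"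
proof -
  note n = assms(1) and r = assms(2) and p = assms(5)
  have n0: "n > 0" using n by simp
  obtain rf where rf: "rf > 0" "\<not> vr_cyclic n rf" "\<forall>q\<in>Pn n. \<exists>w\<in>Pn n. rf \<le> norm (q - w)"
    using far_fail[OF n] by blast
  have rrf: "r < rf" using rcrit_le[OF rf(2,1)] assms(3) by simp
  obtain k where k: "k < n" "v = poly_vert n k" using assms(4) by auto
  define a where "a = poly_pos n p"
  have a: "0 \<le> a" "a < 1" "poly_pt n a = p" using Pn_pos[OF n p] unfolding a_def by auto
  obtain w where w: "w \<in> Pn n" "rf \<le> norm (p - w)" using rf(3) p by blast
  define t0 where "t0 = dP n p w"
  have t0: "poly_pt n (a + t0) = w" "t0 \<in> {0..<1}"
    using Pn_shift[OF n a(1,2) w(1)] a(3) unfolding t0_def by auto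
  define f where "f = (\<lambda>\<tau>. norm (p - poly_pt n (a + \<tau>)))"
  have fc: "continuous_on {0..1} f" unfolding f_def by (rule Hcont[OF n0]) (use a in auto)
  define Tp where "Tp = {\<tau> \<in> {0..1}. norm (p - poly_pt n (poly_pos n p + \<tau>)) = r}"
  have "f 0 \<le> r" unfolding f_def using a r by simp
  moreover have "r \<le> f t0" unfolding f_def using t0 w rrf by simp
  moreover have "continuous_on {0..t0} f" using continuous_on_subset[OF fc] t0 by auto
  ultimately obtain t1 where t1: "0 \<le> t1" "t1 \<le> t0" "f t1 = r" using IVT'[of f 0 r t0] t0 by auto
  have "t1 \<in> Tp" unfolding Tp_def using t1 t0 unfolding f_def a_def by auto
  hence neP: "Tp \<noteq> {}" by auto
  note gp = gmap_char[OF n r p Tp_def neP]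
  define tp where "tp = Inf Tp"
  have tp: "0 \<le> tp" "tp \<le> 1" "f tp = r" using gp(1) unfolding tp_def Tp_def f_def a_def by auto
  have kn: "real k / real n < 1" using k n0 by simp
  have pv: "poly_pos n v = real k / real n"
    using pos_gam[OF n _ kn] gam_vert[OF n0, of k] k by simp
  have vP: "v \<in> Pn n" using pv_in_Pn[OF n0] k by simp
  define fv where "fv = (\<lambda>\<tau>. norm (v - poly_pt n (real k / real n + \<tau>)))"
  have fvc: "continuous_on {0..1} fv" unfolding fv_def by (rule Hcont[OF n0]) (use kn in auto)
  have fv_eq: "\<And>\<tau>. \<tau> \<ge> 0 \<Longrightarrow> fv \<tau> = norm (1 - poly_pt n \<tau>)"
    unfolding fv_def k(2) by (rule chord_vert[OF n0])
  have "f tp \<le> fv tp" unfolding f_def fv_eq[OF tp(1)] a(3)[symmetric] by (rule chord[OF n0 a(1) tp(1)])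
  hence "r \<le> fv tp" using tp by simp
  moreover have "fv 0 \<le> r" unfolding fv_def using k r gam_vert[OF n0, of k] by simp
  moreover have "continuous_on {0..tp} fv" using continuous_on_subset[OF fvc] tp by auto
  ultimately obtain t2 where t2: "0 \<le> t2" "t2 \<le> tp" "fv t2 = r" using IVT'[of fv 0 r tp] tp by auto
  define Tv where "Tv = {\<tau> \<in> {0..1}. norm (v - poly_pt n (poly_pos n v + \<tau>)) = r}"
  have t2T: "t2 \<in> Tv" unfolding Tv_def pv using t2 tp unfolding fv_def by auto
  hence neV: "Tv \<noteq> {}" by auto
  note gv = gmap_char[OF n r vP Tv_def neV]
  have bb: "bdd_below Tv" unfolding Tv_def by (rule bdd_belowI[of _ 0]) auto
  have "dP n v (g_map n r v) = Inf Tv" by (rule gv(2))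
  also have "\<dots> \<le> t2" by (rule cInf_lower[OF t2T bb])
  also have "\<dots> \<le> tp" by (rule t2(2))
  also have "tp = dP n p (g_map n r p)" unfolding tp_def by (rule gp(2)[symmetric])
  finally show ?thesis .
qed

end
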